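(* For every intersection lattice $L$, there exists a tight intersection lattice $L'$ that is isomorphic (as a poset) to $L$.
   Context: A finite family $\mathcal{F}$ of sets is non-trivial if it is non-empty and no $X\in\mathcal{F}$ satisfies $X=\bigcup\mathcal{F}$. For such $\mathcal{F}$ and non-empty $\mathcal{T}\subseteq\mathcal{F}$, let $S_{\mathcal{T}}=\bigcap\mathcal{T}$, and let $S_\emptyset=\bigcup\mathcal{F}$. The intersection lattice of $\mathcal{F}$ is the poset $\mathbb{L}_{\mathcal{F}}=(\{S_{\mathcal{T}}\mid \mathcal{T}\subseteq\mathcal{F}\},\subseteq)$; its greatest element is $\hat 1=\bigcup\mathcal{F}$. A lattice is an intersection lattice if it equals $\mathbb{L}_{\mathcal{F}}$ for some non-trivial finite family $\mathcal{F}$. For $L=\mathbb{L}_{\mathcal{F}}$ and $x\in\hat 1$, let $\min_L(x)=S_{\{X\in\mathcal{F}\mid x\in X\}}$. The intersection lattice $L$ is tight if for every $U\in L$ with $U\neq\hat 1$ there is exactly one $x\in\hat 1$ with $\min_L(x)=U$. *)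

theory Defs
  imports Main
begin

definition nontrivial_family :: "'a set set \<Rightarrow> bool" where
  "nontrivial_family F \<longleftrightarrow> finite F \<and> F \<noteq> {} \<and> (\<forall>X\<in>F. X \<noteq> \<Union>F)"

definition S_of :: "'a set set \<Rightarrow> 'a set set \<Rightarrow> 'a set" where
  "S_of F T = (if T = {} then \<Union>F else \<Inter>T)"

(* carrier of the intersection lattice L_F; the order is set inclusion *)
definition int_lattice :: "'a set set \<Rightarrow> 'a set set" where
  "int_lattice F = {S_of F T | T. T \<subseteq> F}"

definition is_intersection_lattice :: "'a set set \<Rightarrow> bool" where
  "is_intersection_lattice L \<longleftrightarrow> (\<exists>F. nontrivial_family F \<and> L = int_lattice F)"

definition min_L :: "'a set set \<Rightarrow> 'a \<Rightarrow> 'a set" where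
  "min_L F x = S_of F {X \<in> F. x \<in> X}"

definition tight_family :: "'a set set \<Rightarrow> bool" where
  "tight_family F \<longleftrightarrow>
     (\<forall>U\<in>int_lattice F. U \<noteq> \<Union>F \<longrightarrow> (\<exists>!x. x \<in> \<Union>F \<and> min_L F x = U))"

definition is_tight_intersection_lattice :: "'a set set \<Rightarrow> bool" where
  "is_tight_intersection_lattice L \<longleftrightarrow>
     (\<exists>F. nontrivial_family F \<and> L = int_lattice F \<and> tight_family F)"

definition poset_iso :: "'a set set \<Rightarrow> 'b set set \<Rightarrow> bool" where
  "poset_iso L L' \<longleftrightarrow> (\<exists>f. bij_betw f L L' \<and> (\<forall>U\<in>L. \<forall>V\<in>L. U \<subseteq> V \<longleftrightarrow> f U \<subseteq> f V))"

end

theory Submission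
  imports Defs
begin

lemma main_constr:
  fixes F :: "'a set set" and idx :: "'a set \<Rightarrow> nat"
  assumes nt: "nontrivial_family F"
  and inj: "inj_on idx (int_lattice F - {\<Union>F})"
  shows "\<exists>L' :: nat set set. is_tight_intersection_lattice L' \<and> poset_iso (int_lattice F) L'"
proof -
  define top where "top = \<Union>F"
  define N where "N = int_lattice F - {top}"
  define phi where "phi U = idx ` {V\<in>N. V \<subseteq> U}" for U
  have finF: "finite F" and neF: "F \<noteq> {}" and ntop: "\<And>X. X \<in> F \<Longrightarrow> X \<noteq> top"
    using nt by (auto simp: nontrivial_family_def top_def)
  have injN: "inj_on idx N" using inj by (simp add: N_def top_def)
  have Lsub: "V \<subseteq> top" if "V \<in> int_lattice F" for V
    using that by (auto simp: int_lattice_def S_of_def top_def split: if_splits)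
  have FL: "X \<in> int_lattice F" if "X \<in> F" for X
  proof -
    have "S_of F {X} = X" by (simp add: S_of_def)
    thus ?thesis using that unfolding int_lattice_def by blast
  qed
  have topL: "top \<in> int_lattice F"
    unfolding int_lattice_def top_def by (rule CollectI, rule exI[of _ "{}"]) (simp add: S_of_def)
  have NT: "\<exists>T. T \<subseteq> F \<and> T \<noteq> {} \<and> V = \<Inter>T" if "V \<in> N" for V
    using that by (auto simp: N_def int_lattice_def S_of_def top_def split: if_splits)
  have NX: "\<exists>X\<in>F. V \<subseteq> X" if "V \<in> N" for V
    using NT[OF that] by blast
  have emb: "phi U \<subseteq> phi W \<longleftrightarrow> U \<subseteq> W" if U: "U \<in> int_lattice F" and W: "W \<in> int_lattice F" for U W
  proof
    assume "U \<subseteq> W" thus "phi U \<subseteq> phi W" by (auto simp: phi_def)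
  next
    assume sub: "phi U \<subseteq> phi W"
    show "U \<subseteq> W"
    proof (cases "U = top")
      case False
      hence UN: "U \<in> N" using U by (simp add: N_def)
      hence "idx U \<in> phi U" by (auto simp: phi_def)
      with sub obtain V where "V \<in> N" "V \<subseteq> W" "idx U = idx V" by (auto simp: phi_def)
      with injN UN show ?thesis by (metis inj_onD)
    next
      case True
      have "W = top"
      proof (rule ccontr)
        assume "W \<noteq> top"
        have "X \<subseteq> W" if "X \<in> F" for X
        proof -
          have XN: "X \<in> N" using FL[OF that] ntop[OF that] by (simp add: N_def)
          have "idx X \<in> phi top" using XN Lsub[OF FL[OF that]] by (auto simp: phi_def)
          with sub True obtain V where "V \<in> N" "V \<subseteq> W" "idx X = idx V" by (auto simp: phi_def)
          with injN XN show ?thesis by (metis inj_onD)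
        qed
        hence "top \<subseteq> W" by (auto simp: top_def)
        with Lsub[OF W] \<open>W \<noteq> top\<close> show False by auto
      qed
      thus ?thesis using True by simp
    qed
  qed
  have injphi: "inj_on phi (int_lattice F)"
    by (rule inj_onI) (metis emb subset_antisym order_refl)
  have inter: "\<Inter>(phi ` T) = phi (\<Inter>T)" if TT: "T \<subseteq> F" "T \<noteq> {}" for T
  proof
    show "phi (\<Inter>T) \<subseteq> \<Inter>(phi ` T)" by (auto simp: phi_def)
  next
    show "\<Inter>(phi ` T) \<subseteq> phi (\<Inter>T)"
    proof
      fix x assume x: "x \<in> \<Inter>(phi ` T)"
      obtain X0 where X0: "X0 \<in> T" using TT by auto
      then obtain V where V: "V \<in> N" "V \<subseteq> X0" "x = idx V" using x by (auto simp: phi_def)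
      have "V \<subseteq> X" if XT: "X \<in> T" for X
      proof -
        obtain V' where "V' \<in> N" "V' \<subseteq> X" "x = idx V'" using x XT by (auto simp: phi_def)
        with V injN show ?thesis by (metis inj_onD)
      qed
      thus "x \<in> phi (\<Inter>T)" using V by (auto simp: phi_def)
    qed
  qed
  define F' where "F' = phi ` F"
  have unionF': "\<Union>F' = phi top"
  proof
    show "\<Union>F' \<subseteq> phi top" unfolding F'_def phi_def top_def by blast
  next
    show "phi top \<subseteq> \<Union>F'"
    proof
      fix x assume "x \<in> phi top"
      then obtain V where V: "V \<in> N" "x = idx V" by (auto simp: phi_def)
      then obtain X where "X \<in> F" "V \<subseteq> X" using NX by blast
      thus "x \<in> \<Union>F'" using V by (auto simp: F'_def phi_def)
    qed
  qed
  have Sof: "S_of F' (phi ` T) = phi (S_of F T)" if "T \<subseteq> F" for T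
    using that inter unionF' by (auto simp: S_of_def top_def)
  have latt: "int_lattice F' = phi ` int_lattice F"
  proof
    show "int_lattice F' \<subseteq> phi ` int_lattice F"
    proof
      fix U assume "U \<in> int_lattice F'"
      then obtain T' where "T' \<subseteq> phi ` F" "U = S_of F' T'" by (auto simp: int_lattice_def F'_def)
      then obtain T where "T \<subseteq> F" "T' = phi ` T" by (auto simp: subset_image_iff)
      thus "U \<in> phi ` int_lattice F" using Sof \<open>U = S_of F' T'\<close> by (auto simp: int_lattice_def)
    qed
  next
    show "phi ` int_lattice F \<subseteq> int_lattice F'"
    proof
      fix U assume "U \<in> phi ` int_lattice F"
      then obtain T where "T \<subseteq> F" "U = phi (S_of F T)" by (auto simp: int_lattice_def)
      hence "U = S_of F' (phi ` T)" "phi ` T \<subseteq> F'" using Sof by (auto simp: F'_def)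
      thus "U \<in> int_lattice F'" by (auto simp: int_lattice_def)
    qed
  qed
  have ntF': "nontrivial_family F'"
    unfolding nontrivial_family_def
  proof (intro conjI ballI)
    show "finite F'" using finF by (simp add: F'_def)
    show "F' \<noteq> {}" using neF by (simp add: F'_def)
    fix Y assume "Y \<in> F'"
    then obtain X where X: "X \<in> F" "Y = phi X" by (auto simp: F'_def)
    show "Y \<noteq> \<Union>F'"
    proof
      assume "Y = \<Union>F'"
      hence "phi X = phi top" using X unionF' by simp
      hence "X = top" using injphi FL[OF X(1)] topL by (metis inj_onD)
      thus False using ntop X by simp
    qed
  qed
  have minV: "min_L F' (idx V) = phi V" if VN: "V \<in> N" for V
  proof -
    define T where "T = {X\<in>F. V \<subseteq> X}"
    have TF: "T \<subseteq> F" and Tne: "T \<noteq> {}" using NX[OF VN] by (auto simp: T_def)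
    have eq: "{Y \<in> F'. idx V \<in> Y} = phi ` T"
    proof
      show "phi ` T \<subseteq> {Y \<in> F'. idx V \<in> Y}" using VN by (auto simp: T_def F'_def phi_def)
      show "{Y \<in> F'. idx V \<in> Y} \<subseteq> phi ` T"
      proof
        fix Y assume "Y \<in> {Y \<in> F'. idx V \<in> Y}"
        then obtain X V' where "X \<in> F" "Y = phi X" "V' \<in> N" "V' \<subseteq> X" "idx V = idx V'"
          by (auto simp: F'_def phi_def)
        with VN injN have "V \<subseteq> X" by (metis inj_onD)
        thus "Y \<in> phi ` T" using \<open>X \<in> F\<close> \<open>Y = phi X\<close> by (auto simp: T_def)
      qed
    qed
    have "\<Inter>T = V"
    proof
      show "V \<subseteq> \<Inter>T" by (auto simp: T_def)
      obtain T0 where "T0 \<subseteq> F" "T0 \<noteq> {}" "V = \<Inter>T0" using NT[OF VN] by blast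
      hence "T0 \<subseteq> T" by (auto simp: T_def)
      thus "\<Inter>T \<subseteq> V" using \<open>V = \<Inter>T0\<close> by auto
    qed
    thus ?thesis unfolding min_L_def eq using Sof[OF TF] Tne by (simp add: S_of_def)
  qed
  have tight: "tight_family F'"
    unfolding tight_family_def
  proof (intro ballI impI)
    fix U assume UL: "U \<in> int_lattice F'" and Ut: "U \<noteq> \<Union>F'"
    then obtain W where W: "W \<in> int_lattice F" "U = phi W" using latt by auto
    have WN: "W \<in> N" using W Ut unionF' by (auto simp: N_def)
    show "\<exists>!x. x \<in> \<Union>F' \<and> min_L F' x = U"
    proof (rule ex1I[of _ "idx W"])
      show "idx W \<in> \<Union>F' \<and> min_L F' (idx W) = U"
        using WN minV W unionF' Lsub by (auto simp: phi_def N_def)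
    next
      fix x assume x: "x \<in> \<Union>F' \<and> min_L F' x = U"
      then obtain V where V: "V \<in> N" "x = idx V" using unionF' by (auto simp: phi_def)
      hence "phi V = phi W" using minV x W by simp
      hence "V = W" using injphi V WN by (metis inj_onD DiffD1 N_def)
      thus "x = idx W" using V by simp
    qed
  qed
  show ?thesis
  proof (intro exI conjI)
    show "is_tight_intersection_lattice (int_lattice F')"
      unfolding is_tight_intersection_lattice_def using ntF' tight by blast
    show "poset_iso (int_lattice F) (int_lattice F')"
      unfolding poset_iso_def bij_betw_def
      by (rule exI[of _ phi]) (simp add: injphi latt emb)
  qed
qed

theorem lemma4p3:
  fixes L :: "'a set set"
  assumes "is_intersection_lattice L"
  shows "\<exists>L' :: nat set set. is_tight_intersection_lattice L' \<and> poset_iso L L'"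
proof -
  obtain F where F: "nontrivial_family F" "L = int_lattice F"
    using assms by (auto simp: is_intersection_lattice_def)
  have "finite (int_lattice F)"
  proof -
    have "int_lattice F = S_of F ` Pow F" by (auto simp: int_lattice_def)
    thus ?thesis using F(1) by (simp add: nontrivial_family_def)
  qed
  hence "finite (int_lattice F - {\<Union>F})" by simp
  then obtain idx :: "'a set \<Rightarrow> nat" where "inj_on idx (int_lattice F - {\<Union>F})"
    using finite_imp_inj_to_nat_seg by blast
  from main_constr[OF F(1) this] show ?thesis using F(2) by simp
qed

end
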